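(* Let $N\in\mathbb Z$, $\gamma\in\mathbb Q$. For every $k\in\mathbb Q$ and every integer $i\le N$, $$\varphi_{N,\gamma}\Big(\mathrm{Res}_x\big((1+x)^kx^i\textstyle\sum_{j\le N}z^jx^{-j-1}\big)\Big)=(-1)^{i+1}\mathrm{Res}_x\big((1+x)^{\gamma-k-i}x^i\textstyle\sum_{j\le N}z^jx^{-j-1}\big).$$ In particular $\varphi_{N,\gamma}^2=\mathrm{id}$, and $\varphi_{N,\gamma}(O(N,Q,q;z))=O(N,\gamma-Q-q,q;z)$ for all $Q\in\mathbb Q$, $q\in\mathbb Z$.
   Context: $\mathrm{Res}_x$ denotes the coefficient of $x^{-1}$ and $(1+x)^c$ ($c\in\mathbb Q$) denotes the binomial series $\sum_{k\ge0}\binom ckx^k$; thus $\mathrm{Res}_x\big((1+x)^kx^i\sum_{j\le N}z^jx^{-j-1}\big)=\sum_{l=0}^{N-i}\binom kl z^{i+l}$. The linear map $\varphi_{N,\gamma}:\mathbb C[z,z^{-1}]\to\mathbb C[z,z^{-1}]$ is defined on monomials by $\varphi_{N,\gamma}(z^i)=(-1)^{i+1}\mathrm{Res}_x\big((1+x)^{\gamma-i}x^i\sum_{j\le N}z^jx^{-j-1}\big)$ for $i\le N$ and $\varphi_{N,\gamma}(z^i)=z^i$ for $i\ge N+1$. For $N,q\in\mathbb Z$ and $Q\in\mathbb Q$, $O(N,Q,q;z)$ is the subspace of $\mathbb C[z,z^{-1}]$ spanned by $z^i$ ($i\ge N+1$) together with $\sum_{i=0}^{N-q-j}\binom Qi z^{i+q+j}$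 for $j=0,-1,-2,\dots$. *)

theory Defs
  imports Complex_Main
begin

text \<open>Laurent polynomials in C[z,z^-1] are represented by their coefficient
functions int => complex with finite support: f n is the coefficient of z^n.\<close>

definition laurent :: "(int \<Rightarrow> complex) \<Rightarrow> bool" where
  "laurent f \<longleftrightarrow> finite {n. f n \<noteq> 0}"

definition mono :: "int \<Rightarrow> int \<Rightarrow> complex" where
  "mono i = (\<lambda>n. if n = i then 1 else 0)"

text \<open>resx N k i = Res_x((1+x)^k x^i sum_{j<=N} z^j x^{-j-1})
  = sum_{l=0}^{N-i} binom(k,l) z^(i+l).\<close>
definition resx :: "int \<Rightarrow> rat \<Rightarrow> int \<Rightarrow> int \<Rightarrow> complex" where
  "resx N k i = (\<lambda>n. if i \<le> n \<and> n \<le> N then (of_rat k :: complex) gchoose nat (n - i) else 0)"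

definition phi_mono :: "int \<Rightarrow> rat \<Rightarrow> int \<Rightarrow> int \<Rightarrow> complex" where
  "phi_mono N \<gamma> i =
     (if i \<le> N then (\<lambda>n. (-1::complex) powi (i + 1) * resx N (\<gamma> - of_int i) i n)
      else mono i)"

definition phi :: "int \<Rightarrow> rat \<Rightarrow> (int \<Rightarrow> complex) \<Rightarrow> int \<Rightarrow> complex" where
  "phi N \<gamma> f = (\<lambda>n. \<Sum>i\<in>{i. f i \<noteq> 0}. f i * phi_mono N \<gamma> i n)"

definition lspan :: "(int \<Rightarrow> complex) set \<Rightarrow> (int \<Rightarrow> complex) set" where
  "lspan S = {f. \<exists>t r. finite t \<and> t \<subseteq> S \<and> f = (\<lambda>n. \<Sum>a\<in>t. r a * a n)}"

definition Osp :: "int \<Rightarrow> rat \<Rightarrow> int \<Rightarrow> (int \<Rightarrow> complex) set" where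
  "Osp N Q q = lspan ({mono i | i. i \<ge> N + 1} \<union>
     {(\<lambda>n. \<Sum>i\<in>{0..N - q - j}. ((of_rat Q :: complex) gchoose nat i) * mono (i + q + j) n)
       | j. j \<le> 0})"

end

theory Submission
  imports Defs "HOL-Computational_Algebra.Formal_Power_Series"
begin

lemma identA:
  fixes a k :: complex
  shows "(\<Sum>l\<in>{0..s}. (-1)^l * (k gchoose l) * ((a - of_nat l) gchoose (s - l))) = (a - k) gchoose s"
proof -
  have "(\<Sum>l\<in>{0..s}. (-1)^l * (k gchoose l) * ((a - of_nat l) gchoose (s - l)))
      = (\<Sum>l\<in>{0..s}. (-1)^s * ((k gchoose l) * ((of_nat s - a - 1) gchoose (s - l))))"
  proof (rule sum.cong[OF refl])
    fix l assume l: "l \<in> {0..s}"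
    have e: "(of_nat (s - l) - (a - of_nat l) - 1 :: complex) = of_nat s - a - 1"
      using l by (simp add: of_nat_diff)
    have p: "(-1::complex)^l * (-1)^(s-l) = (-1)^s"
      using l by (simp add: power_add[symmetric])
    show "(-1)^l * (k gchoose l) * ((a - of_nat l) gchoose (s - l)) = (-1)^s * ((k gchoose l) * ((of_nat s - a - 1) gchoose (s - l)))"
      apply (subst gbinomial_negated_upper[of "a - of_nat l"])
      using p e by (simp add: algebra_simps)
  qed
  also have "\<dots> = (-1)^s * ((k + (of_nat s - a - 1)) gchoose s)"
    by (simp add: sum_distrib_left[symmetric] gbinomial_Vandermonde)
  also have "\<dots> = (a - k) gchoose s"
    by (subst gbinomial_negated_upper[of "a - k"]) (simp add: algebra_simps)
  finally show ?thesis .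
qed

lemma identB:
  fixes P :: complex
  shows "(\<Sum>m\<in>{0..d}. (of_nat d gchoose m) * (if m \<le> s then P gchoose (s - m) else 0)) = (P + of_nat d) gchoose s"
proof -
  have "(\<Sum>m\<in>{0..d}. (of_nat d gchoose m) * (if m \<le> s then P gchoose (s - m) else 0))
     = (\<Sum>m\<in>{0..d+s}. (of_nat d gchoose m) * (if m \<le> s then P gchoose (s - m) else 0))"
    by (rule sum.mono_neutral_left) (auto simp: binomial_gbinomial[symmetric] binomial_eq_0)
  also have "\<dots> = (\<Sum>m\<in>{0..s}. (of_nat d gchoose m) * (P gchoose (s - m)))"
    by (rule sum.mono_neutral_cong_right) auto
  also have "\<dots> = (of_nat d + P) gchoose s" by (rule gbinomial_Vandermonde)
  finally show ?thesis by (simp add: add.commute)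
qed

lemma supp_resx: "{n. resx N k i n \<noteq> 0} \<subseteq> {i..N}"
  by (auto simp: resx_def split: if_splits)

lemma laurent_resx: "laurent (resx N k i)"
  unfolding laurent_def by (rule finite_subset[OF supp_resx]) simp

lemma laurent_mono: "laurent (mono i)"
  unfolding laurent_def mono_def by (rule finite_subset[of _ "{i}"]) auto

lemma laurent_phi_mono: "laurent (phi_mono N \<gamma> i)"
proof (cases "i \<le> N")
  case True
  have "{n. phi_mono N \<gamma> i n \<noteq> 0} \<subseteq> {n. resx N (\<gamma> - of_int i) i n \<noteq> 0}"
    using True by (auto simp: phi_mono_def)
  then show ?thesis unfolding laurent_def using laurent_resx[unfolded laurent_def]
    by (rule finite_subset)
next
  case False then show ?thesis by (simp add: phi_mono_def laurent_mono)
qed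

lemma phi_eq:
  assumes "finite A" "{i. f i \<noteq> 0} \<subseteq> A"
  shows "phi N \<gamma> f = (\<lambda>n. \<Sum>i\<in>A. f i * phi_mono N \<gamma> i n)"
  unfolding phi_def
  by (rule ext, rule sum.mono_neutral_left) (use assms in auto)

lemma phi_lin:
  assumes J: "finite J" and L: "\<And>j. j \<in> J \<Longrightarrow> laurent (g j)"
  shows "phi N \<gamma> (\<lambda>n. \<Sum>j\<in>J. c j * g j n) = (\<lambda>n. \<Sum>j\<in>J. c j * phi N \<gamma> (g j) n)"
proof -
  define A where "A = (\<Union>j\<in>J. {i. g j i \<noteq> 0})"
  have fA: "finite A" unfolding A_def using J L by (auto simp: laurent_def)
  have sA: "{i. (\<Sum>j\<in>J. c j * g j i) \<noteq> 0} \<subseteq> A"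
  proof
    fix i assume "i \<in> {i. (\<Sum>j\<in>J. c j * g j i) \<noteq> 0}"
    then obtain j where "j \<in> J" "c j * g j i \<noteq> 0"
      by (metis (mono_tags, lifting) mem_Collect_eq sum.neutral)
    then show "i \<in> A" unfolding A_def by auto
  qed
  have gj: "\<And>j. j \<in> J \<Longrightarrow> phi N \<gamma> (g j) = (\<lambda>n. \<Sum>i\<in>A. g j i * phi_mono N \<gamma> i n)"
    by (rule phi_eq[OF fA]) (auto simp: A_def)
  show ?thesis
    apply (subst phi_eq[OF fA sA])
    apply (rule ext)
    apply (simp add: gj sum_distrib_right sum_distrib_left mult.assoc)
    apply (rule sum.swap)
    done
qed

lemma phi_scal:
  assumes "laurent g"
  shows "phi N \<gamma> (\<lambda>n. c * g n) = (\<lambda>n. c * phi N \<gamma> g n)"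
  using phi_lin[of "{0::nat}" "\<lambda>_. g" N \<gamma> "\<lambda>_. c"] assms by simp


lemma claim1:
  assumes iN: "i \<le> N"
  shows "phi N \<gamma> (resx N k i) = (\<lambda>n. (-1::complex) powi (i + 1) * resx N (\<gamma> - k - of_int i) i n)"
proof
  fix n
  have "phi N \<gamma> (resx N k i) n = (\<Sum>m\<in>{i..N}. resx N k i m * phi_mono N \<gamma> m n)"
    by (subst phi_eq[OF _ supp_resx]) auto
  also have "\<dots> = (\<Sum>m\<in>{i..N}. resx N k i m * ((-1::complex) powi (m + 1) * resx N (\<gamma> - of_int m) m n))"
    by (rule sum.cong) (auto simp: phi_mono_def)
  also have "\<dots> = (-1::complex) powi (i + 1) * resx N (\<gamma> - k - of_int i) i n"
  proof (cases "i \<le> n \<and> n \<le> N")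
    case True
    define s where "s = nat (n - i)"
    have ns: "n = i + int s" using True s_def by simp
    have "(\<Sum>m\<in>{i..N}. resx N k i m * ((-1::complex) powi (m + 1) * resx N (\<gamma> - of_int m) m n))
        = (\<Sum>m\<in>{i..n}. resx N k i m * ((-1::complex) powi (m + 1) * resx N (\<gamma> - of_int m) m n))"
      by (rule sum.mono_neutral_right) (use True in \<open>auto simp: resx_def\<close>)
    also have "\<dots> = (\<Sum>l\<in>{0..s}. resx N k i (i + int l) * ((-1::complex) powi (i + int l + 1) * resx N (\<gamma> - of_int (i + int l)) (i + int l) n))"
    proof -
      have "{i..n} = (\<lambda>l. i + int l) ` {0..s}"
        using ns by (auto simp: image_iff intro!: bexI[of _ "nat (_ - i)"])
      moreover have "inj_on (\<lambda>l. i + int l) {0..s}" by (auto simp: inj_on_def)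
      ultimately show ?thesis by (simp add: sum.reindex)
    qed
    also have "\<dots> = (\<Sum>l\<in>{0..s}. (-1::complex) powi (i + 1) * ((-1)^l * (of_rat k gchoose l) * ((of_rat \<gamma> - of_int i - of_nat l) gchoose (s - l))))"
    proof (rule sum.cong[OF refl])
      fix l assume l: "l \<in> {0..s}"
      have pw: "(-1::complex) powi (i + int l + 1) = (-1) powi (i + 1) * (-1)^l"
        by (simp add: power_int_add add.commute add.left_commute)
      have nn: "nat (n - (i + int l)) = s - l" using l ns by auto
      show "resx N k i (i + int l) * ((-1::complex) powi (i + int l + 1) * resx N (\<gamma> - of_int (i + int l)) (i + int l) n)
          = (-1::complex) powi (i + 1) * ((-1)^l * (of_rat k gchoose l) * ((of_rat \<gamma> - of_int i - of_nat l) gchoose (s - l)))"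
        using l ns True unfolding resx_def pw nn
        by (simp add: of_rat_diff of_rat_add algebra_simps)
    qed
    also have "\<dots> = (-1::complex) powi (i + 1) * ((of_rat \<gamma> - of_int i - of_rat k) gchoose s)"
      by (simp add: sum_distrib_left[symmetric] identA)
    also have "\<dots> = (-1::complex) powi (i + 1) * resx N (\<gamma> - k - of_int i) i n"
      using True by (simp add: resx_def s_def of_rat_diff of_rat_add algebra_simps)
    finally show ?thesis .
  next
    case False
    have "\<And>m. m \<in> {i..N} \<Longrightarrow> resx N (\<gamma> - of_int m) m n = 0"
      using False by (auto simp: resx_def)
    moreover have "resx N (\<gamma> - k - of_int i) i n = 0" using False by (auto simp: resx_def)
    ultimately show ?thesis by simp
  qed
  finally show "phi N \<gamma> (resx N k i) n = (-1::complex) powi (i + 1) * resx N (\<gamma> - k - of_int i) i n" .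
qed


lemma resx_0: "i \<le> N \<Longrightarrow> resx N 0 i = mono i"
  by (rule ext) (auto simp: resx_def mono_def gbinomial_0_left)

lemma phi_mono_big: "N < i \<Longrightarrow> phi N \<gamma> (mono i) = mono i"
  by (subst phi_eq[of "{i}"]) (auto simp: mono_def phi_mono_def)

lemma phi_phi_mono: "phi N \<gamma> (phi_mono N \<gamma> i) = mono i"
proof (cases "i \<le> N")
  case True
  have sq: "(-1::complex) powi (i + 1) * (-1) powi (i + 1) = 1"
    by (simp add: power_int_mult_distrib[symmetric])
  have "phi N \<gamma> (phi_mono N \<gamma> i) = phi N \<gamma> (\<lambda>n. (-1::complex) powi (i + 1) * resx N (\<gamma> - of_int i) i n)"
    using True by (simp add: phi_mono_def)
  also have "\<dots> = (\<lambda>n. (-1::complex) powi (i + 1) * phi N \<gamma> (resx N (\<gamma> - of_int i) i) n)"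
    by (rule phi_scal[OF laurent_resx])
  also have "\<dots> = resx N 0 i"
    using True by (simp add: claim1 mult.assoc[symmetric] sq)
  also have "\<dots> = mono i" using True by (rule resx_0)
  finally show ?thesis .
next
  case False then show ?thesis by (simp add: phi_mono_def phi_mono_big)
qed

lemma claim2:
  assumes "laurent f"
  shows "phi N \<gamma> (phi N \<gamma> f) = f"
proof -
  have fin: "finite {i. f i \<noteq> 0}" using assms by (simp add: laurent_def)
  have "phi N \<gamma> (phi N \<gamma> f) = phi N \<gamma> (\<lambda>n. \<Sum>i\<in>{i. f i \<noteq> 0}. f i * phi_mono N \<gamma> i n)"
    by (simp add: phi_def)
  also have "\<dots> = (\<lambda>n. \<Sum>i\<in>{i. f i \<noteq> 0}. f i * phi N \<gamma> (phi_mono N \<gamma> i) n)"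
    by (rule phi_lin[OF fin laurent_phi_mono])
  also have "\<dots> = f"
  proof
    fix n
    have "(\<Sum>i\<in>{i. f i \<noteq> 0}. f i * phi N \<gamma> (phi_mono N \<gamma> i) n)
        = (\<Sum>i\<in>{i. f i \<noteq> 0}. if i = n then f i else 0)"
      by (rule sum.cong) (auto simp: phi_phi_mono mono_def)
    also have "\<dots> = f n" using fin by (simp add: sum.delta)
    finally show "(\<Sum>i\<in>{i. f i \<noteq> 0}. f i * phi N \<gamma> (phi_mono N \<gamma> i) n) = f n" .
  qed
  finally show ?thesis .
qed


lemma lspan_mem: "a \<in> S \<Longrightarrow> a \<in> lspan S"
  unfolding lspan_def by (rule CollectI, rule exI[of _ "{a}"], rule exI[of _ "\<lambda>_. 1"]) auto

lemma lspan_zero: "(\<lambda>n. 0) \<in> lspan S"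
  unfolding lspan_def by (rule CollectI, rule exI[of _ "{}"]) auto

lemma lspan_comb:
  assumes J: "finite J" and G: "\<And>j. j \<in> J \<Longrightarrow> g j \<in> lspan S"
  shows "(\<lambda>n. \<Sum>j\<in>J. c j * g j n) \<in> lspan S"
proof -
  have "\<forall>j\<in>J. \<exists>t r. finite t \<and> t \<subseteq> S \<and> g j = (\<lambda>n. \<Sum>a\<in>t. r a * a n)"
    using G by (auto simp: lspan_def)
  then obtain t r where tr: "\<And>j. j \<in> J \<Longrightarrow> finite (t j) \<and> t j \<subseteq> S \<and> g j = (\<lambda>n. \<Sum>a\<in>t j. r j a * a n)"
    by metis
  define T where "T = (\<Union>j\<in>J. t j)"
  have fT: "finite T" using J tr by (auto simp: T_def)
  have sT: "T \<subseteq> S" using tr by (auto simp: T_def)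
  have gT: "\<And>j n. j \<in> J \<Longrightarrow> g j n = (\<Sum>a\<in>T. (if a \<in> t j then r j a else 0) * a n)"
  proof -
    fix j n assume j: "j \<in> J"
    have "g j n = (\<Sum>a\<in>t j. r j a * a n)" using tr[OF j] by simp
    also have "\<dots> = (\<Sum>a\<in>T. (if a \<in> t j then r j a else 0) * a n)"
      by (rule sum.mono_neutral_cong_left) (use fT j in \<open>auto simp: T_def\<close>)
    finally show "g j n = (\<Sum>a\<in>T. (if a \<in> t j then r j a else 0) * a n)" .
  qed
  have "(\<lambda>n. \<Sum>j\<in>J. c j * g j n) = (\<lambda>n. \<Sum>a\<in>T. (\<Sum>j\<in>J. c j * (if a \<in> t j then r j a else 0)) * a n)"
  proof
    fix n
    show "(\<Sum>j\<in>J. c j * g j n) = (\<Sum>a\<in>T. (\<Sum>j\<in>J. c j * (if a \<in> t j then r j a else 0)) * a n)"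
      by (simp add: gT sum_distrib_left sum_distrib_right mult.assoc cong: sum.cong) (rule sum.swap)
  qed
  then show ?thesis unfolding lspan_def
    by (intro CollectI exI[of _ T] exI[of _ "\<lambda>a. \<Sum>j\<in>J. c j * (if a \<in> t j then r j a else 0)"])
      (use fT sT in simp)
qed

lemma lspan_laurent:
  assumes "\<And>a. a \<in> S \<Longrightarrow> laurent a" "f \<in> lspan S"
  shows "laurent f"
proof -
  obtain t r where tr: "finite t" "t \<subseteq> S" "f = (\<lambda>n. \<Sum>a\<in>t. r a * a n)"
    using assms(2) by (auto simp: lspan_def)
  have "{n. f n \<noteq> 0} \<subseteq> (\<Union>a\<in>t. {n. a n \<noteq> 0})"
  proof
    fix n assume "n \<in> {n. f n \<noteq> 0}"
    then obtain a where "a \<in> t" "r a * a n \<noteq> 0" using tr(3)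
      by (metis (mono_tags, lifting) mem_Collect_eq sum.neutral)
    then show "n \<in> (\<Union>a\<in>t. {n. a n \<noteq> 0})" by auto
  qed
  moreover have "finite (\<Union>a\<in>t. {n. a n \<noteq> 0})"
    using tr assms(1) by (auto simp: laurent_def)
  ultimately show ?thesis unfolding laurent_def by (rule finite_subset)
qed

definition gen :: "int \<Rightarrow> rat \<Rightarrow> int \<Rightarrow> (int \<Rightarrow> complex) set" where
  "gen N Q q = {mono i | i. i \<ge> N + 1} \<union> {resx N Q (q + j) | j. j \<le> 0}"

lemma gen_eq:
  "(\<lambda>n. \<Sum>i\<in>{0..N - q - j}. ((of_rat Q :: complex) gchoose nat i) * mono (i + q + j) n) = resx N Q (q + j)"
proof
  fix n
  have "(\<Sum>i\<in>{0..N - q - j}. ((of_rat Q :: complex) gchoose nat i) * mono (i + q + j) n)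
      = (\<Sum>i\<in>{0..N - q - j}. if i = n - q - j then (of_rat Q :: complex) gchoose nat i else 0)"
    by (rule sum.cong) (auto simp: mono_def)
  also have "\<dots> = resx N Q (q + j) n"
    using sum.delta[of "{0..N - q - j}" "n - q - j" "\<lambda>i. (of_rat Q :: complex) gchoose nat i"]
    by (auto simp: resx_def diff_diff_eq)
  finally show "(\<Sum>i\<in>{0..N - q - j}. ((of_rat Q :: complex) gchoose nat i) * mono (i + q + j) n) = resx N Q (q + j) n" .
qed

lemma Osp_alt: "Osp N Q q = lspan (gen N Q q)"
  unfolding Osp_def gen_def gen_eq ..

lemma gen_laurent: "a \<in> gen N Q q \<Longrightarrow> laurent a"
  by (auto simp: gen_def laurent_mono laurent_resx)

lemma resx_shift:
  "resx N (P + of_nat d) i = (\<lambda>n. \<Sum>m\<in>{0..d}. ((of_nat d :: complex) gchoose m) * resx N P (i + int m) n)"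
proof
  fix n
  show "resx N (P + of_nat d) i n = (\<Sum>m\<in>{0..d}. ((of_nat d :: complex) gchoose m) * resx N P (i + int m) n)"
  proof (cases "i \<le> n \<and> n \<le> N")
    case True
    define s where "s = nat (n - i)"
    have "(\<Sum>m\<in>{0..d}. ((of_nat d :: complex) gchoose m) * resx N P (i + int m) n)
       = (\<Sum>m\<in>{0..d}. ((of_nat d :: complex) gchoose m) * (if m \<le> s then of_rat P gchoose (s - m) else 0))"
    proof (rule sum.cong[OF refl])
      fix m assume m: "m \<in> {0..d}"
      have e1: "(i + int m \<le> n) = (m \<le> s)" using True s_def by auto
      have e2: "m \<le> s \<Longrightarrow> nat (n - (i + int m)) = s - m" using True s_def by auto
      show "((of_nat d :: complex) gchoose m) * resx N P (i + int m) n
          = ((of_nat d :: complex) gchoose m) * (if m \<le> s then of_rat P gchoose (s - m) else 0)"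
        using True e1 e2 by (auto simp: resx_def)
    qed
    also have "\<dots> = (of_rat P + of_nat d) gchoose s" by (rule identB)
    finally show ?thesis using True by (simp add: resx_def s_def of_rat_add)
  next
    case False
    then show ?thesis by (auto simp: resx_def intro!: sum.neutral)
  qed
qed

lemma phi_zero: "phi N \<gamma> (\<lambda>n. 0) = (\<lambda>n. 0)"
  by (simp add: phi_def)

lemma phi_gen:
  assumes a: "a \<in> gen N Q q"
  shows "phi N \<gamma> a \<in> lspan (gen N (\<gamma> - Q - of_int q) q)"
proof -
  let ?P = "\<gamma> - Q - of_int q"
  show ?thesis
  proof (cases "a \<in> {mono i | i. i \<ge> N + 1}")
    case True
    then obtain i where i: "a = mono i" "i \<ge> N + 1" by auto
    then show ?thesis by (auto simp: phi_mono_big gen_def intro!: lspan_mem)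
  next
    case False
    then obtain j where j: "a = resx N Q (q + j)" "j \<le> 0" using a by (auto simp: gen_def)
    show ?thesis
    proof (cases "q + j \<le> N")
      case False
      then have "a = (\<lambda>n. 0)" using j by (auto simp: resx_def)
      then show ?thesis by (simp add: phi_zero lspan_zero)
    next
      case True
      define d where "d = nat (- j)"
      have g: "\<gamma> - Q - of_int (q + j) = ?P + of_nat d" using j by (simp add: d_def)
      have "phi N \<gamma> a = (\<lambda>n. (-1::complex) powi (q + j + 1) * resx N (\<gamma> - Q - of_int (q + j)) (q + j) n)"
        using True j by (simp add: claim1)
      also have "\<dots> = (\<lambda>n. (-1::complex) powi (q + j + 1) * resx N (?P + of_nat d) (q + j) n)"
        unfolding g ..
      also have "\<dots> = (\<lambda>n. \<Sum>m\<in>{0..d}. ((-1::complex) powi (q + j + 1) * ((of_nat d :: complex) gchoose m)) * resx N ?P (q + (j + int m)) n)"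
        by (simp add: resx_shift sum_distrib_left mult.assoc add.assoc)
      also have "\<dots> \<in> lspan (gen N ?P q)"
      proof (rule lspan_comb)
        fix m assume m: "m \<in> {0..d}"
        have "j + int m \<le> 0" using m j by (simp add: d_def)
        then show "resx N ?P (q + (j + int m)) \<in> lspan (gen N ?P q)"
          unfolding gen_def by (intro lspan_mem) blast
      qed simp
      finally show ?thesis .
    qed
  qed
qed

lemma Osp_sub:
  assumes "x \<in> Osp N Q q"
  shows "phi N \<gamma> x \<in> Osp N (\<gamma> - Q - of_int q) q"
proof -
  obtain t r where tr: "finite t" "t \<subseteq> gen N Q q" "x = (\<lambda>n. \<Sum>a\<in>t. r a * a n)"
    using assms by (auto simp: Osp_alt lspan_def)
  have "phi N \<gamma> x = (\<lambda>n. \<Sum>a\<in>t. r a * phi N \<gamma> a n)"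
    unfolding tr(3) by (rule phi_lin[OF tr(1)]) (use tr(2) in \<open>auto intro: gen_laurent\<close>)
  also have "\<dots> \<in> lspan (gen N (\<gamma> - Q - of_int q) q)"
    by (rule lspan_comb[OF tr(1)]) (use tr(2) in \<open>auto intro: phi_gen\<close>)
  finally show ?thesis by (simp add: Osp_alt)
qed

theorem mainTheorem6:
  fixes N :: int and \<gamma> :: rat
  shows "(\<forall>(k::rat) (i::int). i \<le> N \<longrightarrow>
            phi N \<gamma> (resx N k i) =
            (\<lambda>n. (-1::complex) powi (i + 1) * resx N (\<gamma> - k - of_int i) i n))
       \<and> (\<forall>f. laurent f \<longrightarrow> phi N \<gamma> (phi N \<gamma> f) = f)
       \<and> (\<forall>(Q::rat) (q::int). phi N \<gamma> ` Osp N Q q = Osp N (\<gamma> - Q - of_int q) q)"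
proof (intro conjI allI impI)
  fix k i assume "i \<le> N" then show "phi N \<gamma> (resx N k i) =
            (\<lambda>n. (-1::complex) powi (i + 1) * resx N (\<gamma> - k - of_int i) i n)" by (rule claim1)
next
  fix f :: "int \<Rightarrow> complex" assume "laurent f" then show "phi N \<gamma> (phi N \<gamma> f) = f" by (rule claim2)
next
  fix Q q
  show "phi N \<gamma> ` Osp N Q q = Osp N (\<gamma> - Q - of_int q) q"
  proof
    show "phi N \<gamma> ` Osp N Q q \<subseteq> Osp N (\<gamma> - Q - of_int q) q" by (auto intro: Osp_sub)
  next
    show "Osp N (\<gamma> - Q - of_int q) q \<subseteq> phi N \<gamma> ` Osp N Q q"
    proof
      fix y assume y: "y \<in> Osp N (\<gamma> - Q - of_int q) q"
      have "phi N \<gamma> y \<in> Osp N (\<gamma> - (\<gamma> - Q - of_int q) - of_int q) q" by (rule Osp_sub[OF y])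
      then have pin: "phi N \<gamma> y \<in> Osp N Q q" by simp
      have "laurent y" using y unfolding Osp_alt by (rule lspan_laurent[rotated]) (rule gen_laurent)
      then have yeq: "y = phi N \<gamma> (phi N \<gamma> y)" by (simp add: claim2)
      show "y \<in> phi N \<gamma> ` Osp N Q q" by (rule image_eqI[where f="phi N \<gamma>", OF yeq pin])
    qed
  qed
qed

end
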